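(* For every integer $n\geq1$, $\mathrm{C}_{\sharp\leq2}\nleq_W\mathrm{C}_{\sharp=n}$.
   Context: Represented spaces carry partial surjections $\delta:\subseteq\mathbb{N}^\mathbb{N}\to X$; a realizer $F$ of $f$ satisfies $\delta_YF(p)\in f(\delta_X(p))$ for $p\in\operatorname{dom}(f\delta_X)$. $f\leq_W g$ iff there are computable partial $K,H$ on Baire space such that $p\mapsto K\langle p,G(H(p))\rangle$ realizes $f$ for every realizer $G$ of $g$. Closed subsets of Cantor space are named by binary trees (set of infinite paths); $\mathrm{C}_{\sharp\leq m}$ is the restriction of $\mathrm{C}_{\{0,1\}^\mathbb{N}}$ (output any point of the closed set) to trees having exactly $m$ vertices at each level $k$ with $2^k\geq m$, and $\mathrm{C}_{\sharp=m}$ its further restriction to trees in which, from some finite depth on, every vertex has exactly one child. *)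

theory Defs
  imports Main
begin

type_synonym baire = "nat \<Rightarrow> nat"

text \<open>Terms for mu-recursive functions relative to an oracle p in Baire space.\<close>
datatype rf = Zero | Succ | Proj nat | Orc | Comp rf "rf list" | Prim rf rf | Mu rf

definition arg0 :: "nat list \<Rightarrow> nat" where
  "arg0 xs = (case xs of [] \<Rightarrow> 0 | x # _ \<Rightarrow> x)"

inductive ev :: "baire \<Rightarrow> rf \<Rightarrow> nat list \<Rightarrow> nat \<Rightarrow> bool" for p :: baire where
  ev_zero: "ev p Zero xs 0"
| ev_succ: "ev p Succ xs (Suc (arg0 xs))"
| ev_proj: "ev p (Proj i) xs (if i < length xs then xs ! i else 0)"
| ev_orc: "ev p Orc xs (p (arg0 xs))"
| ev_comp: "list_all2 (\<lambda>g y. ev p g xs y) gs ys \<Longrightarrow> ev p f ys z \<Longrightarrow> ev p (Comp f gs) xs z"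
| ev_prim0: "ev p f xs z \<Longrightarrow> ev p (Prim f g) (0 # xs) z"
| ev_primS: "ev p (Prim f g) (k # xs) y \<Longrightarrow> ev p g (k # y # xs) z
             \<Longrightarrow> ev p (Prim f g) (Suc k # xs) z"
| ev_mu: "ev p f (k # xs) 0 \<Longrightarrow> (\<forall>m<k. \<exists>y. 0 < y \<and> ev p f (m # xs) y)
          \<Longrightarrow> ev p (Mu f) xs k"

definition computable_partial :: "(baire \<Rightarrow> baire option) \<Rightarrow> bool" where
  "computable_partial F \<longleftrightarrow>
     (\<exists>e. \<forall>p q. F p = Some q \<longrightarrow> (\<forall>n. ev p e [n] (q n)))"

definition pair :: "baire \<Rightarrow> baire \<Rightarrow> baire" where
  "pair p q = (\<lambda>n. if even n then p (n div 2) else q (n div 2))"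

text \<open>A representation is a partial map delta from Baire space; a (partial multivalued)
  problem f assigns to each point its set of solutions; dom f = points with nonempty value.\<close>

definition realizer_dom :: "(baire \<Rightarrow> 'a option) \<Rightarrow> ('a \<Rightarrow> 'b set) \<Rightarrow> baire set" where
  "realizer_dom dX f = {p. \<exists>x. dX p = Some x \<and> f x \<noteq> {}}"

definition realizes ::
  "(baire \<Rightarrow> 'a option) \<Rightarrow> (baire \<Rightarrow> 'b option) \<Rightarrow> ('a \<Rightarrow> 'b set) \<Rightarrow> (baire \<Rightarrow> baire option) \<Rightarrow> bool" where
  "realizes dX dY f F \<longleftrightarrow>
     (\<forall>p \<in> realizer_dom dX f. \<exists>q y. F p = Some q \<and> dY q = Some y \<and> y \<in> f (the (dX p)))"

definition weihrauch_le ::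
  "(baire \<Rightarrow> 'a option) \<Rightarrow> (baire \<Rightarrow> 'b option) \<Rightarrow> ('a \<Rightarrow> 'b set) \<Rightarrow>
   (baire \<Rightarrow> 'c option) \<Rightarrow> (baire \<Rightarrow> 'd option) \<Rightarrow> ('c \<Rightarrow> 'd set) \<Rightarrow> bool" where
  "weihrauch_le dX dY f dU dV g \<longleftrightarrow>
     (\<exists>K H. computable_partial K \<and> computable_partial H \<and>
        (\<forall>G. realizes dU dV g G \<longrightarrow>
              realizes dX dY f (\<lambda>p. Option.bind (H p) (\<lambda>h. Option.bind (G h) (\<lambda>r. K (pair p r))))))"

text \<open>Bijective coding of binary words by natural numbers.\<close>
fun wcode :: "bool list \<Rightarrow> nat" where
  "wcode [] = 0"
| "wcode (b # w) = Suc (2 * wcode w + (if b then 1 else 0))"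

definition is_tree :: "bool list set \<Rightarrow> bool" where
  "is_tree T \<longleftrightarrow> (\<forall>u v. u @ v \<in> T \<longrightarrow> u \<in> T)"

text \<open>A tree is named by the characteristic function of its set of vertices.\<close>
definition tree_rep :: "baire \<Rightarrow> bool list set option" where
  "tree_rep p = (if (\<forall>n. p n \<le> 1) \<and> is_tree {w. p (wcode w) = 1}
                 then Some {w. p (wcode w) = 1} else None)"

definition cantor_rep :: "baire \<Rightarrow> (nat \<Rightarrow> bool) option" where
  "cantor_rep p = (if (\<forall>n. p n \<le> 1) then Some (\<lambda>n. p n = 1) else None)"

definition paths :: "bool list set \<Rightarrow> (nat \<Rightarrow> bool) set" where
  "paths T = {x. \<forall>k. map x [0..<k] \<in> T}"

definition level :: "bool list set \<Rightarrow> nat \<Rightarrow> bool list set" where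
  "level T k = {w \<in> T. length w = k}"

definition C_le :: "nat \<Rightarrow> bool list set \<Rightarrow> (nat \<Rightarrow> bool) set" where
  "C_le m T = (if is_tree T \<and> (\<forall>k. m \<le> 2 ^ k \<longrightarrow> card (level T k) = m)
               then paths T else {})"

definition C_eq :: "nat \<Rightarrow> bool list set \<Rightarrow> (nat \<Rightarrow> bool) set" where
  "C_eq m T = (if is_tree T \<and> (\<forall>k. m \<le> 2 ^ k \<longrightarrow> card (level T k) = m)
                  \<and> (\<exists>d. \<forall>w \<in> T. d \<le> length w \<longrightarrow> card {b. w @ [b] \<in> T} = 1)
               then paths T else {})"

end

theory Submission
  imports Defs
begin


definition agree :: "nat \<Rightarrow> baire \<Rightarrow> baire \<Rightarrow> bool" where
  "agree N a b \<longleftrightarrow> (\<forall>t<N. a t = b t)"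

lemma agree_mono: "agree N a b \<Longrightarrow> M \<le> N \<Longrightarrow> agree M a b"
  by (auto simp: agree_def)

lemma list_all2_det:
  "list_all2 (\<lambda>g y. ev p g xs y \<and> (\<forall>y'. ev p g xs y' \<longrightarrow> y = y')) gs ys \<Longrightarrow>
   list_all2 (\<lambda>g. ev p g xs) gs ys' \<Longrightarrow> ys = ys'"
proof (induction gs ys arbitrary: ys' rule: list_all2_induct)
  case Nil then show ?case by simp
next
  case (Cons g gs y ys)
  from Cons.prems obtain y' ys'' where "ys' = y' # ys''" "ev p g xs y'" "list_all2 (\<lambda>g. ev p g xs) gs ys''"
    by (auto simp: list_all2_Cons1)
  then show ?case using Cons by auto
qed

lemma ev_det: "ev p e xs y \<Longrightarrow> ev p e xs y' \<Longrightarrow> y = y'"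
proof (induction arbitrary: y' rule: ev.induct)
  case (ev_comp xs gs ys f z)
  from ev_comp.prems obtain ys' where "list_all2 (\<lambda>g. ev p g xs) gs ys'" "ev p f ys' y'"
    by (cases rule: ev.cases) auto
  then show ?case using ev_comp list_all2_det[OF ev_comp(1)] by blast
next
  case (ev_prim0 f xs z g)
  from ev_prim0.prems show ?case by (cases rule: ev.cases) (use ev_prim0 in auto)
next
  case (ev_primS f g k xs y z)
  from ev_primS.prems obtain y2 where "ev p (Prim f g) (k # xs) y2" "ev p g (k # y2 # xs) y'"
    by (cases rule: ev.cases) auto
  then show ?case using ev_primS by blast
next
  case (ev_mu f k xs)
  from ev_mu.prems have A: "ev p f (y' # xs) 0" "\<forall>m<y'. \<exists>y>0. ev p f (m # xs) y"
    by (cases rule: ev.cases; auto)+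
  show ?case
  proof (rule ccontr)
    assume "k \<noteq> y'"
    then consider "k < y'" | "y' < k" by linarith
    then show False
    proof cases
      case 1
      with A obtain y where "y > 0" "ev p f (k # xs) y" by blast
      with ev_mu.IH(1) show False by auto
    next
      case 2
      with ev_mu.IH(2) obtain y where "y > 0" "\<forall>y'. ev p f (y' # xs) y \<longrightarrow> False \<or> True" "ev p f (y' # xs) y \<and> (\<forall>y''. ev p f (y' # xs) y'' \<longrightarrow> y = y'')" by blast
      with A show False by auto
    qed
  qed
qed (auto elim: ev.cases)

lemma fin_use:
  fixes k :: nat and P :: "nat \<Rightarrow> nat \<Rightarrow> bool"
  assumes "\<forall>m<k. \<exists>N. P m N" and "\<And>m N N'. P m N \<Longrightarrow> N \<le> N' \<Longrightarrow> P m N'"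
  shows "\<exists>N. \<forall>m<k. P m N"
  using assms(1)
proof (induction k)
  case 0 then show ?case by simp
next
  case (Suc k)
  then obtain N where N: "\<forall>m<k. P m N" by auto
  from Suc.prems obtain N1 where N1: "P k N1" by auto
  have "\<forall>m<Suc k. P m (max N N1)"
    using N N1 assms(2) by (metis less_Suc_eq max.cobounded1 max.cobounded2)
  then show ?case by blast
qed

definition uses :: "baire \<Rightarrow> rf \<Rightarrow> nat list \<Rightarrow> nat \<Rightarrow> nat \<Rightarrow> bool" where
  "uses p e xs y N \<longleftrightarrow> (\<forall>p'. agree N p p' \<longrightarrow> ev p' e xs y)"

lemma uses_mono: "uses p e xs y N \<Longrightarrow> N \<le> N' \<Longrightarrow> uses p e xs y N'"
  unfolding uses_def using agree_mono by blast

lemma list_all2_use: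
  "list_all2 (\<lambda>g y. ev p g xs y \<and> (\<exists>N. uses p g xs y N)) gs ys \<Longrightarrow>
   \<exists>N. list_all2 (\<lambda>g y. uses p g xs y N) gs ys"
proof (induction gs ys rule: list_all2_induct)
  case Nil then show ?case by simp
next
  case (Cons g gs y ys)
  then obtain N N1 where "list_all2 (\<lambda>g y. uses p g xs y N) gs ys" "uses p g xs y N1" by auto
  then have "list_all2 (\<lambda>g y. uses p g xs y (max N N1)) (g # gs) (y # ys)"
    by (auto elim!: list_all2_mono intro: uses_mono)
  then show ?case by blast
qed

lemma ev_use: "ev p e xs y \<Longrightarrow> \<exists>N. uses p e xs y N"
proof (induction rule: ev.induct)
  case (ev_zero xs) then show ?case by (auto simp: uses_def intro: ev.intros)
next
  case (ev_succ xs) then show ?case by (auto simp: uses_def intro: ev.intros)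
next
  case (ev_proj i xs) then show ?case unfolding uses_def using ev.ev_proj by blast
next
  case (ev_orc xs)
  have "uses p Orc xs (p (arg0 xs)) (Suc (arg0 xs))"
    unfolding uses_def agree_def using ev.ev_orc by (metis lessI)
  then show ?case by blast
next
  case (ev_comp xs gs ys f z)
  obtain N where N: "list_all2 (\<lambda>g y. uses p g xs y N) gs ys" using list_all2_use ev_comp.IH(1) by blast
  obtain N1 where N1: "uses p f ys z N1" using ev_comp.IH(2) by blast
  have "uses p (Comp f gs) xs z (max N N1)"
    unfolding uses_def
  proof (intro allI impI)
    fix p' assume a: "agree (max N N1) p p'"
    have "list_all2 (\<lambda>g y. ev p' g xs y) gs ys"
      using N by (rule list_all2_mono) (use a in \<open>meson agree_mono max.cobounded1 uses_def\<close>)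
    moreover have "ev p' f ys z" using N1 a by (meson agree_mono max.cobounded2 uses_def)
    ultimately show "ev p' (Comp f gs) xs z" by (rule ev.ev_comp)
  qed
  then show ?case by blast
next
  case (ev_prim0 f xs z g)
  then obtain N where "uses p f xs z N" by blast
  then have "uses p (Prim f g) (0 # xs) z N" by (auto simp: uses_def intro: ev.intros)
  then show ?case by blast
next
  case (ev_primS f g k xs y z)
  then obtain N N1 where "uses p (Prim f g) (k # xs) y N" "uses p g (k # y # xs) z N1" by blast
  then have "uses p (Prim f g) (Suc k # xs) z (max N N1)"
    unfolding uses_def by (meson agree_mono ev.ev_primS max.cobounded1 max.cobounded2)
  then show ?case by blast
next
  case (ev_mu f k xs)
  obtain N where N: "uses p f (k # xs) 0 N" using ev_mu.IH(1) by blast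
  have "\<forall>m<k. \<exists>N. \<exists>y>0. uses p f (m # xs) y N" using ev_mu.IH(2) by blast
  then obtain N1 where N1: "\<forall>m<k. \<exists>y>0. uses p f (m # xs) y N1"
    using fin_use[of k "\<lambda>m N. \<exists>y>0. uses p f (m # xs) y N"] uses_mono by blast
  have "uses p (Mu f) xs k (max N N1)"
    unfolding uses_def
  proof (intro allI impI)
    fix p' assume a: "agree (max N N1) p p'"
    have "ev p' f (k # xs) 0" using N a by (meson agree_mono max.cobounded1 uses_def)
    moreover have "\<forall>m<k. \<exists>y>0. ev p' f (m # xs) y"
      using N1 a by (meson agree_mono max.cobounded2 uses_def)
    ultimately show "ev p' (Mu f) xs k" by (rule ev.ev_mu)
  qed
  then show ?case by blast
qed

lemma comp_cont1:
  assumes "computable_partial F" "F p = Some q"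
  shows "\<exists>N. \<forall>p' q'. agree N p p' \<longrightarrow> F p' = Some q' \<longrightarrow> q' m = q m"
proof -
  obtain e where e: "\<forall>p q. F p = Some q \<longrightarrow> (\<forall>n. ev p e [n] (q n))"
    using assms(1) unfolding computable_partial_def by blast
  then have "ev p e [m] (q m)" using assms(2) by blast
  then obtain N where N: "uses p e [m] (q m) N" using ev_use by blast
  show ?thesis
  proof (intro exI allI impI)
    fix p' q' assume "agree N p p'" "F p' = Some q'"
    then have "ev p' e [m] (q m)" "ev p' e [m] (q' m)" using N e by (auto simp: uses_def)
    then show "q' m = q m" using ev_det by metis
  qed
qed

lemma comp_cont:
  assumes "computable_partial F" "F p = Some q"
  shows "\<exists>N. \<forall>p' q'. agree N p p' \<longrightarrow> F p' = Some q' \<longrightarrow> agree M q q'"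
proof -
  have "\<forall>m<M. \<exists>N. \<forall>p' q'. agree N p p' \<longrightarrow> F p' = Some q' \<longrightarrow> q' m = q m"
    using comp_cont1[OF assms] by blast
  then obtain N where "\<forall>m<M. \<forall>p' q'. agree N p p' \<longrightarrow> F p' = Some q' \<longrightarrow> q' m = q m"
    using fin_use[of M "\<lambda>m N. \<forall>p' q'. agree N p p' \<longrightarrow> F p' = Some q' \<longrightarrow> q' m = q m"] agree_mono
    by blast
  then show ?thesis unfolding agree_def by metis
qed

lemma agree_pair: "agree N p p' \<Longrightarrow> agree N r r' \<Longrightarrow> agree N (pair p r) (pair p' r')"
  unfolding agree_def pair_def by auto



definition Tr :: "(nat \<Rightarrow> bool) \<Rightarrow> nat set \<Rightarrow> bool list set" where
  "Tr z B = {w. w = map z [0..<length w] \<or>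
     (\<exists>i. i < length w \<and> i \<in> B \<and> (\<forall>i'\<in>B. i' < length w \<longrightarrow> i' \<le> i) \<and>
          w = map z [0..<i] @ [\<not> z i] @ replicate (length w - Suc i) False)}"

lemma Tr_mem_level:
  assumes "i \<in> B" "i < k" "\<forall>i'\<in>B. i' < k \<longrightarrow> i' \<le> i" "length w = k"
  shows "w \<in> Tr z B \<longleftrightarrow> w = map z [0..<k] \<or> w = map z [0..<i] @ [\<not> z i] @ replicate (k - Suc i) False"
proof
  assume "w \<in> Tr z B"
  then consider "w = map z [0..<k]" | i' where "i' < k" "i' \<in> B" "\<forall>i''\<in>B. i'' < k \<longrightarrow> i'' \<le> i'"
      "w = map z [0..<i'] @ [\<not> z i'] @ replicate (k - Suc i') False"
    unfolding Tr_def using assms(4) by auto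
  then show "w = map z [0..<k] \<or> w = map z [0..<i] @ [\<not> z i] @ replicate (k - Suc i) False"
  proof cases
    case 1 then show ?thesis by simp
  next
    case 2
    then have "i' = i" using assms by (meson le_antisym)
    then show ?thesis using 2 by simp
  qed
next
  assume "w = map z [0..<k] \<or> w = map z [0..<i] @ [\<not> z i] @ replicate (k - Suc i) False"
  then show "w \<in> Tr z B" unfolding Tr_def using assms by auto
qed

lemma Tr_tree: "is_tree (Tr z B)"
  unfolding is_tree_def
proof (intro allI impI)
  fix u v assume uv: "u @ v \<in> Tr z B"
  let ?w = "u @ v"
  have tk: "take (length u) ?w = u" by simp
  from uv consider "?w = map z [0..<length ?w]" | i where "i < length ?w" "i \<in> B"
     "\<forall>i'\<in>B. i' < length ?w \<longrightarrow> i' \<le> i"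
     "?w = map z [0..<i] @ [\<not> z i] @ replicate (length ?w - Suc i) False"
    unfolding Tr_def by blast
  then show "u \<in> Tr z B"
  proof cases
    case 1
    then have "u = take (length u) (map z [0..<length ?w])" using tk by metis
    then have "u = map z [0..<length u]" by (simp add: take_map)
    then show ?thesis unfolding Tr_def by blast
  next
    case 2
    show ?thesis
    proof (cases "length u \<le> i")
      case True
      have "u = take (length u) (map z [0..<i] @ [\<not> z i] @ replicate (length ?w - Suc i) False)"
        using tk 2(4) by metis
      also have "\<dots> = map z [0..<length u]" using True by (simp add: take_map)
      finally show ?thesis unfolding Tr_def by blast
    next
      case False
      have "u = take (length u) (map z [0..<i] @ [\<not> z i] @ replicate (length ?w - Suc i) False)"
        using tk 2(4) by metis
      also have "\<dots> = map z [0..<i] @ [\<not> z i] @ replicate (length u - Suc i) False"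
      proof -
        have "length u - i = Suc (length u - Suc i)" using False by simp
        then show ?thesis using False by (simp add: min_def)
      qed
      finally have "u = map z [0..<i] @ [\<not> z i] @ replicate (length u - Suc i) False" .
      moreover have "\<forall>i'\<in>B. i' < length u \<longrightarrow> i' \<le> i" using 2(3) by auto
      ultimately show ?thesis unfolding Tr_def mem_Collect_eq
        by (intro disjI2 exI[of _ i]) (use False 2(2) in auto)
    qed
  qed
qed

lemma Tr_path: "z \<in> paths (Tr z B)"
  unfolding paths_def Tr_def by auto

lemma max_below:
  fixes k :: nat and B :: "nat set"
  assumes "0 \<in> B" "0 < k"
  obtains i where "i \<in> B" "i < k" "\<forall>i'\<in>B. i' < k \<longrightarrow> i' \<le> i"
proof -
  let ?S = "B \<inter> {..<k}"
  have "finite ?S" by (rule finite_Int) simp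
  have "?S \<noteq> {}" using assms by auto
  then have "Max ?S \<in> ?S" "\<forall>x\<in>?S. x \<le> Max ?S" using \<open>finite ?S\<close> Max_in Max_ge by blast+
  then show ?thesis using that by auto
qed

lemma Tr_card:
  assumes "0 \<in> B" "1 \<le> k"
  shows "card (level (Tr z B) k) = 2"
proof -
  obtain i where i: "i \<in> B" "i < k" "\<forall>i'\<in>B. i' < k \<longrightarrow> i' \<le> i"
    using max_below[OF assms(1), of k] assms(2) by auto
  let ?a = "map z [0..<k]" and ?b = "map z [0..<i] @ [\<not> z i] @ replicate (k - Suc i) False"
  have L: "level (Tr z B) k = {?a, ?b}"
    unfolding level_def using Tr_mem_level[OF i] i(2) by auto
  have "?a ! i = z i" using i(2) by simp
  moreover have "?b ! i = (\<not> z i)" by (simp add: nth_append)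
  ultimately have "?a \<noteq> ?b" by auto
  then show ?thesis using L by simp
qed

lemma Tr_C_le:
  assumes "0 \<in> B"
  shows "C_le 2 (Tr z B) = paths (Tr z B)"
proof -
  have "\<forall>k. 2 \<le> (2::nat) ^ k \<longrightarrow> card (level (Tr z B) k) = 2"
  proof (intro allI impI)
    fix k :: nat assume "2 \<le> (2::nat) ^ k"
    then have "1 \<le> k" by (cases k) auto
    then show "card (level (Tr z B) k) = 2" using Tr_card assms by blast
  qed
  then show ?thesis unfolding C_le_def using Tr_tree by simp
qed

lemma Tr_unique:
  assumes "0 \<in> B" "infinite B" "x \<in> paths (Tr z B)"
  shows "x = z"
proof (rule ccontr)
  assume "x \<noteq> z"
  then obtain m where m: "x m \<noteq> z m" by auto
  obtain b where b: "b \<in> B" "m < b" using assms(2)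
    by (metis finite_nat_set_iff_bounded_le not_le_imp_less)
  let ?k = "Suc b"
  have i: "b \<in> B" "b < ?k" "\<forall>i'\<in>B. i' < ?k \<longrightarrow> i' \<le> b" using b by auto
  have "map x [0..<?k] \<in> Tr z B" using assms(3) unfolding paths_def by blast
  then have "map x [0..<?k] = map z [0..<?k] \<or> map x [0..<?k] = map z [0..<b] @ [\<not> z b] @ replicate (?k - Suc b) False"
    using Tr_mem_level[OF i] by simp
  then have "take b (map x [0..<?k]) = map z [0..<b]"
  proof
    assume "map x [0..<?k] = map z [0..<?k]"
    then show ?thesis by (simp add: take_map del: upt_Suc)
  next
    assume "map x [0..<?k] = map z [0..<b] @ [\<not> z b] @ replicate (?k - Suc b) False"
    then show ?thesis by (simp del: upt_Suc)
  qed
  then have "map x [0..<b] = map z [0..<b]" by (simp add: take_map del: upt_Suc)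
  then have "map x [0..<b] ! m = map z [0..<b] ! m" by (simp only:)
  then show False using m b(2) by simp
qed

lemma Tr_local:
  assumes "\<forall>t<k. z t = z' t" "\<forall>i<k. i \<in> B \<longleftrightarrow> i \<in> B'" "length w = k"
  shows "w \<in> Tr z B \<longleftrightarrow> w \<in> Tr z' B'"
proof -
  have m: "\<And>j. j \<le> k \<Longrightarrow> map z [0..<j] = map z' [0..<j]" using assms(1) by auto
  have 1: "(w = map z [0..<length w]) = (w = map z' [0..<length w])" using m[of "length w"] assms(3) by (metis order_refl)
  have 2: "(\<exists>i. i < length w \<and> i \<in> B \<and> (\<forall>i'\<in>B. i' < length w \<longrightarrow> i' \<le> i) \<and>
          w = map z [0..<i] @ [\<not> z i] @ replicate (length w - Suc i) False) =
        (\<exists>i. i < length w \<and> i \<in> B' \<and> (\<forall>i'\<in>B'. i' < length w \<longrightarrow> i' \<le> i) \<and>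
          w = map z' [0..<i] @ [\<not> z' i] @ replicate (length w - Suc i) False)"
  proof -
    have "\<And>i. i < length w \<Longrightarrow> (i \<in> B \<and> (\<forall>i'\<in>B. i' < length w \<longrightarrow> i' \<le> i) \<and>
          w = map z [0..<i] @ [\<not> z i] @ replicate (length w - Suc i) False) =
        (i \<in> B' \<and> (\<forall>i'\<in>B'. i' < length w \<longrightarrow> i' \<le> i) \<and>
          w = map z' [0..<i] @ [\<not> z' i] @ replicate (length w - Suc i) False)"
    proof -
      fix i assume i: "i < length w"
      have "(\<forall>i'\<in>B. i' < length w \<longrightarrow> i' \<le> i) = (\<forall>i'\<in>B'. i' < length w \<longrightarrow> i' \<le> i)"
        using assms(2,3) by auto
      moreover have e: "map z [0..<i] = map z' [0..<i]" using m i assms(3) by (metis less_imp_le_nat)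
      moreover have "z i = z' i" using i assms(1,3) by auto
      moreover have "i \<in> B \<longleftrightarrow> i \<in> B'" using assms(2,3) i by auto
      ultimately show "?thesis i" by (simp only:)
    qed
    then show ?thesis by blast
  qed
  show ?thesis unfolding Tr_def using 1 2 by simp
qed



definition W :: "bool list set \<Rightarrow> baire" where
  "W T = (\<lambda>n. if \<exists>w\<in>T. wcode w = n then 1 else 0)"

definition cname :: "(nat \<Rightarrow> bool) \<Rightarrow> baire" where
  "cname y = (\<lambda>t. if y t then 1 else 0)"

lemma wcode_inj: "wcode u = wcode v \<Longrightarrow> u = v"
proof (induction u arbitrary: v)
  case Nil then show ?case by (cases v) auto
next
  case (Cons a u)
  then show ?case
  proof (cases v)
    case Nil then show ?thesis using Cons by simp
  next
    case (Cons b v')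
    with Cons.prems have "2 * wcode u + (if a then 1 else 0) = 2 * wcode v' + (if b then 1 else 0)" by simp
    then have "a = b" "wcode u = wcode v'" by (auto split: if_splits) presburger+
    then show ?thesis using Cons Cons.IH by simp
  qed
qed

lemma wcode_len: "length w \<le> wcode w"
  by (induction w) auto

lemma wcode_bound: "wcode w + 2 \<le> 2 ^ (length w + 1)"
  by (induction w) auto

lemma tree_rep_W: "is_tree T \<Longrightarrow> tree_rep (W T) = Some T"
proof -
  assume t: "is_tree T"
  have e: "{w. W T (wcode w) = 1} = T" unfolding W_def using wcode_inj by auto
  have "\<forall>n. W T n \<le> 1" unfolding W_def by auto
  then show ?thesis unfolding tree_rep_def using e t by simp
qed

lemma cantor_cname: "cantor_rep (cname y) = Some y"
  unfolding cantor_rep_def cname_def by auto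

lemma W_agree:
  assumes "\<forall>w. length w < E \<longrightarrow> (w \<in> T \<longleftrightarrow> w \<in> T')"
  shows "agree E (W T) (W T')"
  unfolding agree_def W_def
proof (intro allI impI)
  fix t assume t: "t < E"
  have "(\<exists>w\<in>T. wcode w = t) = (\<exists>w\<in>T'. wcode w = t)"
    using assms t wcode_len by (metis le_less_trans)
  then show "(if \<exists>w\<in>T. wcode w = t then 1 else 0) = (if \<exists>w\<in>T'. wcode w = t then 1 else (0::nat))" by simp
qed

lemma S_agree:
  assumes "tree_rep h = Some S" "tree_rep h' = Some S'" "agree (2 ^ (N + 1)) h h'" "length w \<le> N"
  shows "w \<in> S \<longleftrightarrow> w \<in> S'"
proof -
  have S: "S = {w. h (wcode w) = 1}" "S' = {w. h' (wcode w) = 1}"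
    using assms(1,2) unfolding tree_rep_def by (auto split: if_splits)
  have "wcode w < 2 ^ (N + 1)"
  proof -
    have "wcode w + 2 \<le> 2 ^ (length w + 1)" by (rule wcode_bound)
    also have "\<dots> \<le> 2 ^ (N + 1)" using assms(4) by (intro power_increasing) auto
    finally show ?thesis by simp
  qed
  then have "h (wcode w) = h' (wcode w)" using assms(3) unfolding agree_def by blast
  then show ?thesis using S by simp
qed

lemma cname_agree: "map y [0..<N] = map y' [0..<N] \<Longrightarrow> agree N (cname y) (cname y')"
  unfolding agree_def cname_def by (simp add: map_eq_conv)

lemma ext_path:
  assumes "is_tree S" "w \<in> S" "\<forall>v\<in>S. length w \<le> length v \<longrightarrow> (\<exists>b. v @ [b] \<in> S)"
  shows "\<exists>y\<in>paths S. map y [0..<length w] = w"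
proof -
  define f where "f = (\<lambda>v. v @ [SOME b. v @ [b] \<in> S])"
  define u where "u = (\<lambda>m. (f ^^ m) w)"
  have u0: "u 0 = w" and uS: "\<And>m. u (Suc m) = f (u m)" unfolding u_def by auto
  have P: "\<And>m. u m \<in> S \<and> length (u m) = length w + m"
  proof -
    fix m show "u m \<in> S \<and> length (u m) = length w + m"
    proof (induction m)
      case 0 then show ?case using u0 assms(2) by simp
    next
      case (Suc m)
      then have "\<exists>b. u m @ [b] \<in> S" using assms(3) by simp
      then have "u m @ [SOME b. u m @ [b] \<in> S] \<in> S" by (rule someI_ex)
      then show ?case using Suc uS unfolding f_def by simp
    qed
  qed
  have pre: "\<And>m k. \<exists>v. u (m + k) = u m @ v"
  proof -
    fix m k show "\<exists>v. u (m + k) = u m @ v"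
    proof (induction k)
      case 0 then show ?case by simp
    next
      case (Suc k)
      then obtain v where "u (m + k) = u m @ v" by blast
      then show ?case using uS[of "m + k"] unfolding f_def by auto
    qed
  qed
  have nth_stable: "\<And>m m' t. t < length (u m) \<Longrightarrow> t < length (u m') \<Longrightarrow> u m ! t = u m' ! t"
  proof -
    fix m m' t assume a: "t < length (u m)" "t < length (u m')"
    show "u m ! t = u m' ! t"
    proof (cases "m \<le> m'")
      case True
      then obtain v where "u m' = u m @ v" using pre[of m "m' - m"] by auto
      then show ?thesis using a by (simp add: nth_append)
    next
      case False
      then obtain v where "u m = u m' @ v" using pre[of m' "m - m'"] by auto
      then show ?thesis using a by (simp add: nth_append)
    qed
  qed
  define y where "y = (\<lambda>t. u (Suc t) ! t)"
  have tk: "\<And>k. map y [0..<k] = take k (u k)"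
  proof -
    fix k
    show "map y [0..<k] = take k (u k)"
    proof (rule nth_equalityI)
      show "length (map y [0..<k]) = length (take k (u k))" using P by simp
    next
      fix t assume "t < length (map y [0..<k])"
      then have t: "t < k" by simp
      have "y t = u k ! t" unfolding y_def using P t by (intro nth_stable) auto
      then show "map y [0..<k] ! t = take k (u k) ! t" using t by simp
    qed
  qed
  have "y \<in> paths S" unfolding paths_def
  proof (intro CollectI allI)
    fix k
    have "take k (u k) @ drop k (u k) \<in> S" using P by simp
    then show "map y [0..<k] \<in> S" using tk assms(1) unfolding is_tree_def by metis
  qed
  moreover have "map y [0..<length w] = w" using tk[of "length w"] P[of "length w"]
  proof -
    have "map y [0..<length w] = map y [0..<length w]" ..
    have "take (length w) (u (length w)) = w"
    proof -
      obtain v where "u (0 + length w) = u 0 @ v" using pre by blast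
      then show ?thesis using u0 by simp
    qed
    then show ?thesis using tk by simp
  qed
  ultimately show ?thesis by blast
qed

lemma key:
  assumes R: "\<forall>G. realizes tree_rep cantor_rep (C_eq n) G \<longrightarrow>
     realizes tree_rep cantor_rep (C_le 2) (\<lambda>p. Option.bind (H p) (\<lambda>h. Option.bind (G h) (\<lambda>r. K (pair p r))))"
  and p: "p \<in> realizer_dom tree_rep (C_le 2)"
  shows "\<exists>h S. H p = Some h \<and> tree_rep h = Some S \<and> C_eq n S \<noteq> {} \<and>
     (\<forall>y\<in>C_eq n S. \<exists>q x. K (pair p (cname y)) = Some q \<and> cantor_rep q = Some x \<and> x \<in> C_le 2 (the (tree_rep p)))"
proof -
  let ?D = "realizer_dom tree_rep (C_eq n)"
  define G0 where "G0 = (\<lambda>h. if h \<in> ?D then Some (cname (SOME y. y \<in> C_eq n (the (tree_rep h)))) else None)"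
  let ?Phi = "\<lambda>G p. Option.bind (H p) (\<lambda>h. Option.bind (G h) (\<lambda>r. K (pair p r)))"
  have G0: "\<And>h. h \<in> ?D \<Longrightarrow> \<exists>q y. G0 h = Some q \<and> cantor_rep q = Some y \<and> y \<in> C_eq n (the (tree_rep h))"
  proof -
    fix h assume h: "h \<in> ?D"
    then have "C_eq n (the (tree_rep h)) \<noteq> {}" unfolding realizer_dom_def by auto
    then have "(SOME y. y \<in> C_eq n (the (tree_rep h))) \<in> C_eq n (the (tree_rep h))"
      by (simp add: some_in_eq)
    then show "?thesis h" unfolding G0_def using h cantor_cname by auto
  qed
  have upd: "\<And>h0 v. (h0 \<in> ?D \<longrightarrow> (\<exists>q y. v = Some q \<and> cantor_rep q = Some y \<and> y \<in> C_eq n (the (tree_rep h0))))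
      \<Longrightarrow> realizes tree_rep cantor_rep (C_eq n) (G0(h0 := v))"
    unfolding realizes_def using G0 by auto
  have use: "\<And>G. realizes tree_rep cantor_rep (C_eq n) G \<Longrightarrow>
     \<exists>q y. ?Phi G p = Some q \<and> cantor_rep q = Some y \<and> y \<in> C_le 2 (the (tree_rep p))"
    using R p unfolding realizes_def by blast
  obtain h where h: "H p = Some h"
  proof (cases "H p")
    case None
    have "realizes tree_rep cantor_rep (C_eq n) G0" unfolding realizes_def using G0 by auto
    then show ?thesis using use None by fastforce
  next
    case (Some a) then show ?thesis using that by blast
  qed
  have hD: "h \<in> ?D"
  proof (rule ccontr)
    assume "h \<notin> ?D"
    then have "realizes tree_rep cantor_rep (C_eq n) (G0(h := None))" using upd by blast
    from use[OF this] show False using h by simp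
  qed
  then obtain S where S: "tree_rep h = Some S" "C_eq n S \<noteq> {}" unfolding realizer_dom_def by auto
  have "\<forall>y\<in>C_eq n S. \<exists>q x. K (pair p (cname y)) = Some q \<and> cantor_rep q = Some x \<and> x \<in> C_le 2 (the (tree_rep p))"
  proof
    fix y assume y: "y \<in> C_eq n S"
    have "realizes tree_rep cantor_rep (C_eq n) (G0(h := Some (cname y)))"
      using upd cantor_cname y S by auto
    from use[OF this] show "\<exists>q x. K (pair p (cname y)) = Some q \<and> cantor_rep q = Some x \<and> x \<in> C_le 2 (the (tree_rep p))"
      using h by simp
  qed
  then show ?thesis using h S by blast
qed



definition ext :: "bool list \<Rightarrow> nat \<Rightarrow> bool" where
  "ext \<pi> t = (t < length \<pi> \<and> \<pi> ! t)"

lemma map_take: "\<forall>t<k. f t = xs ! t \<Longrightarrow> k \<le> length xs \<Longrightarrow> map f [0..<k] = take k xs"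
  by (rule nth_equalityI) auto

locale seq =
  fixes \<pi> :: "nat \<Rightarrow> bool list" and dd :: "nat \<Rightarrow> bool" and ee :: "nat \<Rightarrow> nat"
  assumes A0: "\<pi> 0 = []" and AS: "\<And>j. \<pi> (Suc j) = \<pi> j @ [dd j] @ replicate (ee j) False"
begin

definition L where "L j = length (\<pi> j)"
definition zw where "zw t = \<pi> (Suc t) ! t"

lemma L_Suc: "L (Suc j) = L j + 1 + ee j"
  unfolding L_def using AS by simp

lemma L_mono: "strict_mono L"
  by (simp add: strict_mono_Suc_iff L_Suc)

lemma L_ge: "j \<le> L j"
  using L_mono by (simp add: strict_mono_imp_increasing)

lemma L_le: "j \<le> m \<Longrightarrow> L j \<le> L m"
  using L_mono by (simp add: strict_mono_less_eq)

lemma prefix: "\<exists>v. \<pi> (j + k) = \<pi> j @ v"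
proof (induction k)
  case 0 then show ?case by simp
next
  case (Suc k) then show ?case using AS[of "j + k"] by auto
qed

lemma nth_st: "t < L j \<Longrightarrow> t < L m \<Longrightarrow> \<pi> j ! t = \<pi> m ! t"
proof (cases "j \<le> m")
  case True
  assume t: "t < L j"
  obtain v where "\<pi> m = \<pi> j @ v" using prefix[of j "m - j"] True by auto
  then show ?thesis using t by (simp add: nth_append L_def)
next
  case False
  assume t: "t < L m"
  obtain v where "\<pi> j = \<pi> m @ v" using prefix[of m "j - m"] False by auto
  then show ?thesis using t by (simp add: nth_append L_def)
qed

lemma z_nth: "t < L j \<Longrightarrow> zw t = \<pi> j ! t"
  unfolding zw_def
  using nth_st L_ge[of "Suc t"] by (metis Suc_le_lessD)

lemma zw_d: "zw (L j) = dd j"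
proof -
  have "L j < L (Suc j)" using L_Suc by simp
  then have "zw (L j) = \<pi> (Suc j) ! L j" by (rule z_nth)
  then show ?thesis using AS[of j] by (simp add: nth_append L_def)
qed

lemma B_eq: "k \<le> L (Suc j) \<Longrightarrow> i < k \<Longrightarrow> i \<in> range L \<longleftrightarrow> i \<in> L ` {..j}"
proof
  assume a: "k \<le> L (Suc j)" "i < k" "i \<in> range L"
  then obtain m where m: "i = L m" by auto
  have "m \<le> j"
  proof (rule ccontr)
    assume "\<not> m \<le> j" then have "Suc j \<le> m" by simp
    then have "L (Suc j) \<le> L m" by (rule L_le)
    then show False using a m by simp
  qed
  then show "i \<in> L ` {..j}" using m by auto
qed auto

lemma agreement:
  assumes "length w \<le> L (Suc j)"
  shows "w \<in> Tr zw (range L) \<longleftrightarrow> w \<in> Tr (ext (\<pi> j)) (L ` {..j})"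
proof (cases "length w \<le> L j")
  case True
  show ?thesis
  proof (rule Tr_local[where k = "length w"])
    show "\<forall>t<length w. zw t = ext (\<pi> j) t" using True z_nth by (auto simp: ext_def L_def)
    show "\<forall>i<length w. (i \<in> range L) = (i \<in> L ` {..j})" using B_eq assms by blast
  qed simp
next
  case False
  let ?k = "length w"
  let ?i = "L j"
  have i1: "?i \<in> range L" "?i < ?k" "\<forall>i'\<in>range L. i' < ?k \<longrightarrow> i' \<le> ?i"
  proof -
    show "?i \<in> range L" "?i < ?k" using False by auto
    show "\<forall>i'\<in>range L. i' < ?k \<longrightarrow> i' \<le> ?i"
    proof (intro ballI impI)
      fix i' assume "i' \<in> range L" "i' < ?k"
      then obtain m where m: "i' = L m" "L m < L (Suc j)" using assms by auto
      then have "m < Suc j" using L_mono strict_mono_less by blast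
      then show "i' \<le> ?i" using m L_le by simp
    qed
  qed
  have i2: "?i \<in> L ` {..j}" "?i < ?k" "\<forall>i'\<in>L ` {..j}. i' < ?k \<longrightarrow> i' \<le> ?i"
    using False L_le by auto
  have pj: "map zw [0..<?i] = \<pi> j"
    using map_take[of ?i zw "\<pi> j"] z_nth by (simp add: L_def)
  have pjs: "map zw [0..<?k] = \<pi> j @ [dd j] @ replicate (?k - Suc ?i) False"
  proof -
    have "map zw [0..<?k] = take ?k (\<pi> (Suc j))"
      using map_take[of ?k zw "\<pi> (Suc j)"] z_nth assms by (simp add: L_def)
    also have "\<dots> = \<pi> j @ [dd j] @ replicate (?k - Suc ?i) False"
    proof -
      have "?k - ?i = Suc (?k - Suc ?i)" using False by simp
      moreover have "?k - Suc ?i \<le> ee j" using assms L_Suc by simp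
      ultimately show ?thesis using AS[of j] False by (simp add: L_def min_def)
    qed
    finally show ?thesis .
  qed
  have e1: "map (ext (\<pi> j)) [0..<?i] = \<pi> j"
    using map_take[of ?i "ext (\<pi> j)" "\<pi> j"] by (simp add: ext_def L_def)
  have e2: "map (ext (\<pi> j)) [0..<?k] = \<pi> j @ [False] @ replicate (?k - Suc ?i) False"
  proof (rule nth_equalityI)
    show "length (map (ext (\<pi> j)) [0..<?k]) = length (\<pi> j @ [False] @ replicate (?k - Suc ?i) False)"
      using False by (simp add: L_def)
  next
    fix t assume "t < length (map (ext (\<pi> j)) [0..<?k])"
    then show "map (ext (\<pi> j)) [0..<?k] ! t = (\<pi> j @ [False] @ replicate (?k - Suc ?i) False) ! t"
      by (auto simp: ext_def nth_append L_def nth_Cons')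
  qed
  have e3: "ext (\<pi> j) ?i = False" by (simp add: ext_def L_def)
  show ?thesis
    unfolding Tr_mem_level[OF i1 refl] Tr_mem_level[OF i2 refl] pj pjs e1 e2 e3 zw_d
    by (cases "dd j") auto
qed

end



definition spec :: "(baire \<Rightarrow> baire option) \<Rightarrow> (baire \<Rightarrow> baire option) \<Rightarrow> bool list \<Rightarrow> nat set \<Rightarrow> nat \<Rightarrow> bool \<Rightarrow> nat \<Rightarrow> bool" where
  "spec K H \<pi> B e d N \<longleftrightarrow>
   (\<exists>h S y q. H (W (Tr (ext \<pi>) B)) = Some h \<and> tree_rep h = Some S \<and> y \<in> paths S \<and>
      K (pair (W (Tr (ext \<pi>) B)) (cname y)) = Some q \<and> d = (q (length \<pi>) \<noteq> 1) \<and> length \<pi> \<le> N \<and>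
      (\<forall>p' r' q'. agree (length \<pi> + 1 + e) (W (Tr (ext \<pi>) B)) p' \<longrightarrow> agree N (cname y) r' \<longrightarrow>
          K (pair p' r') = Some q' \<longrightarrow> q' (length \<pi>) = q (length \<pi>)) \<and>
      (\<forall>p' h'. agree (length \<pi> + 1 + e) (W (Tr (ext \<pi>) B)) p' \<longrightarrow> H p' = Some h' \<longrightarrow> agree (2 ^ (N + 1)) h h'))"

primrec stg :: "(bool list \<times> nat set \<Rightarrow> nat \<times> bool \<times> nat) \<Rightarrow> nat \<Rightarrow> bool list \<times> nat set" where
  "stg ch 0 = ([], {0})"
| "stg ch (Suc j) = (fst (stg ch j) @ [fst (snd (ch (stg ch j)))] @ replicate (fst (ch (stg ch j))) False,
     insert (length (fst (stg ch j)) + 1 + fst (ch (stg ch j))) (snd (stg ch j)))"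

lemma Tr_rdom:
  assumes "0 \<in> B"
  shows "W (Tr z B) \<in> realizer_dom tree_rep (C_le 2)" "tree_rep (W (Tr z B)) = Some (Tr z B)"
proof -
  show t: "tree_rep (W (Tr z B)) = Some (Tr z B)" using tree_rep_W Tr_tree by blast
  have "C_le 2 (Tr z B) \<noteq> {}" using Tr_C_le[OF assms] Tr_path[of z B] by auto
  then show "W (Tr z B) \<in> realizer_dom tree_rep (C_le 2)" unfolding realizer_dom_def using t by auto
qed

lemma C_eq_paths: "C_eq n S \<noteq> {} \<Longrightarrow> C_eq n S = paths S \<and> is_tree S \<and>
   (\<exists>d. \<forall>w \<in> S. d \<le> length w \<longrightarrow> card {b. w @ [b] \<in> S} = 1)"
  unfolding C_eq_def by (auto split: if_splits)

context
  fixes K H :: "baire \<Rightarrow> baire option" and n :: nat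
  assumes cK: "computable_partial K" and cH: "computable_partial H"
  and R: "\<forall>G. realizes tree_rep cantor_rep (C_eq n) G \<longrightarrow>
     realizes tree_rep cantor_rep (C_le 2) (\<lambda>p. Option.bind (H p) (\<lambda>h. Option.bind (G h) (\<lambda>r. K (pair p r))))"
begin

lemma spec_exists:
  assumes "0 \<in> B"
  shows "\<exists>e d N. spec K H \<pi> B e d N"
proof -
  define p where "p = W (Tr (ext \<pi>) B)"
  let ?i = "length \<pi>"
  have pd: "p \<in> realizer_dom tree_rep (C_le 2)" using Tr_rdom[OF assms] p_def by simp
  obtain h S where hS: "H p = Some h" "tree_rep h = Some S" "C_eq n S \<noteq> {}"
    "\<forall>y\<in>C_eq n S. \<exists>q x. K (pair p (cname y)) = Some q \<and> cantor_rep q = Some x \<and> x \<in> C_le 2 (the (tree_rep p))"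
    using key[OF R pd] by blast
  obtain y where y: "y \<in> C_eq n S" using hS(3) by blast
  then have yp: "y \<in> paths S" using C_eq_paths hS(3) by blast
  obtain q where q: "K (pair p (cname y)) = Some q" using hS(4) y by blast
  have NKex: "\<exists>N. \<forall>v q'. agree N (pair p (cname y)) v \<longrightarrow> K v = Some q' \<longrightarrow> q' ?i = q ?i"
    by (rule comp_cont1[where F=K and p="pair p (cname y)" and q=q and m="length \<pi>", OF cK q])
  then obtain NK where NK: "\<forall>v q'. agree NK (pair p (cname y)) v \<longrightarrow> K v = Some q' \<longrightarrow> q' ?i = q ?i"
    by (rule exE)
  define N where "N = max NK ?i"
  obtain U where U: "\<forall>p' h'. agree U p p' \<longrightarrow> H p' = Some h' \<longrightarrow> agree (2 ^ (N + 1)) h h'"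
    using comp_cont[OF cH hS(1)] by blast
  define e where "e = max U N"
  have 1: "\<forall>p' r' q'. agree (?i + 1 + e) p p' \<longrightarrow> agree N (cname y) r' \<longrightarrow>
          K (pair p' r') = Some q' \<longrightarrow> q' ?i = q ?i"
  proof (intro allI impI)
    fix p' r' q' assume a: "agree (?i + 1 + e) p p'" "agree N (cname y) r'" "K (pair p' r') = Some q'"
    have "agree NK p p'" using a(1) agree_mono unfolding e_def N_def by fastforce
    moreover have "agree NK (cname y) r'" using a(2) agree_mono unfolding N_def by fastforce
    ultimately have "agree NK (pair p (cname y)) (pair p' r')" by (rule agree_pair)
    then show "q' ?i = q ?i" using NK a(3) by blast
  qed
  have 2: "\<forall>p' h'. agree (?i + 1 + e) p p' \<longrightarrow> H p' = Some h' \<longrightarrow> agree (2 ^ (N + 1)) h h'"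
  proof (intro allI impI)
    fix p' h' assume a: "agree (?i + 1 + e) p p'" "H p' = Some h'"
    have "agree U p p'" using a(1) agree_mono unfolding e_def by fastforce
    then show "agree (2 ^ (N + 1)) h h'" using U a(2) by blast
  qed
  have "spec K H \<pi> B e (q ?i \<noteq> 1) N"
    unfolding spec_def p_def[symmetric]
    using hS(1,2) yp q 1 2 unfolding N_def by fastforce
  then show ?thesis by blast
qed


lemma no_reduction: False
proof -
  define ch where "ch = (\<lambda>s. SOME t. spec K H (fst s) (snd s) (fst t) (fst (snd t)) (snd (snd t)))"
  define \<pi> where "\<pi> = (\<lambda>j. fst (stg ch j))"
  define dd where "dd = (\<lambda>j. fst (snd (ch (stg ch j))))"
  define ee where "ee = (\<lambda>j. fst (ch (stg ch j)))"
  define Ns where "Ns = (\<lambda>j. snd (snd (ch (stg ch j))))"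
  interpret S: seq \<pi> dd ee
    by unfold_locales (simp_all add: \<pi>_def dd_def ee_def)
  have Bj: "snd (stg ch j) = S.L ` {..j}" for j
  proof (induction j)
    case 0
    have "S.L 0 = 0" by (simp add: S.L_def S.A0)
    then show ?case by simp
  next
    case (Suc j)
    have "snd (stg ch (Suc j)) = insert (S.L (Suc j)) (snd (stg ch j))"
      using S.L_Suc[of j] unfolding S.L_def by (simp add: \<pi>_def ee_def)
    then show ?case using Suc by (simp add: atMost_Suc)
  qed
  have L0: "S.L 0 = 0" by (simp add: S.L_def S.A0)
  have sp: "spec K H (\<pi> j) (S.L ` {..j}) (ee j) (dd j) (Ns j)" for j
  proof -
    have "0 \<in> snd (stg ch j)" using Bj L0 by (metis atMost_iff image_eqI le0)
    then obtain e d N where "spec K H (fst (stg ch j)) (snd (stg ch j)) e d N" using spec_exists by blast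
    then have "\<exists>t. spec K H (fst (stg ch j)) (snd (stg ch j)) (fst t) (fst (snd t)) (snd (snd t))"
      by (intro exI[of _ "(e, d, N)"]) simp
    then have "spec K H (fst (stg ch j)) (snd (stg ch j)) (fst (ch (stg ch j))) (fst (snd (ch (stg ch j)))) (snd (snd (ch (stg ch j))))"
      unfolding ch_def by (rule someI_ex)
    then show ?thesis using Bj by (simp add: \<pi>_def dd_def ee_def Ns_def)
  qed
  define T where "T = Tr S.zw (range S.L)"
  have T0: "0 \<in> range S.L" using L0 by (metis rangeI)
  have Tinf: "infinite (range S.L)"
    using finite_imageD[of S.L UNIV] strict_mono_imp_inj_on[OF S.L_mono] by auto
  define pw where "pw = W T"
  have pwd: "pw \<in> realizer_dom tree_rep (C_le 2)" and trp: "tree_rep pw = Some T"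
    using Tr_rdom[OF T0] unfolding pw_def T_def by auto
  obtain hw Sw where hS: "H pw = Some hw" "tree_rep hw = Some Sw" "C_eq n Sw \<noteq> {}"
    "\<forall>y\<in>C_eq n Sw. \<exists>q x. K (pair pw (cname y)) = Some q \<and> cantor_rep q = Some x \<and> x \<in> C_le 2 (the (tree_rep pw))"
    using key[OF R pwd] by blast
  obtain dw where Sw: "C_eq n Sw = paths Sw" "is_tree Sw" "\<forall>w \<in> Sw. dw \<le> length w \<longrightarrow> card {b. w @ [b] \<in> Sw} = 1"
    using C_eq_paths[OF hS(3)] by blast
  define j where "j = dw"
  define i where "i = S.L j"
  define pj where "pj = W (Tr (ext (\<pi> j)) (S.L ` {..j}))"
  have ij: "length (\<pi> j) = i" by (simp add: i_def S.L_def)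
  obtain h S y q where sj: "H pj = Some h" "tree_rep h = Some S" "y \<in> paths S"
      "K (pair pj (cname y)) = Some q" "dd j = (q i \<noteq> 1)" "i \<le> Ns j"
      "\<forall>p' r' q'. agree (i + 1 + ee j) pj p' \<longrightarrow> agree (Ns j) (cname y) r' \<longrightarrow>
          K (pair p' r') = Some q' \<longrightarrow> q' i = q i"
      "\<forall>p' h'. agree (i + 1 + ee j) pj p' \<longrightarrow> H p' = Some h' \<longrightarrow> agree (2 ^ (Ns j + 1)) h h'"
    using sp[of j] unfolding spec_def pj_def[symmetric] ij by blast
  have E: "i + 1 + ee j = S.L (Suc j)" using S.L_Suc i_def by simp
  have ag: "agree (i + 1 + ee j) pj pw"
    unfolding pj_def pw_def E T_def
    by (rule W_agree) (metis S.agreement less_imp_le_nat)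
  have hag: "agree (2 ^ (Ns j + 1)) h hw" using sj(8) ag hS(1) by blast
  define w0 where "w0 = map y [0..<Ns j]"
  have "w0 \<in> S" using sj(3) unfolding w0_def paths_def by blast
  then have w0S: "w0 \<in> Sw" using S_agree[OF sj(2) hS(2) hag] by (simp add: w0_def)
  have "j \<le> Ns j" using S.L_ge[of j] sj(6) i_def by simp
  then have "\<forall>v\<in>Sw. length w0 \<le> length v \<longrightarrow> (\<exists>b. v @ [b] \<in> Sw)"
    using Sw(3) unfolding w0_def j_def
    by (metis (mono_tags, lifting) One_nat_def card.empty diff_zero empty_Collect_eq
        length_map length_upt order.trans zero_neq_one)
  then obtain y' where y': "y' \<in> paths Sw" "map y' [0..<length w0] = w0"
    using ext_path[OF Sw(2) w0S] by blast
  have "agree (Ns j) (cname y) (cname y')"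
    using y'(2) by (intro cname_agree) (simp add: w0_def)
  moreover obtain q' x' where q': "K (pair pw (cname y')) = Some q'" "cantor_rep q' = Some x'"
      "x' \<in> C_le 2 (the (tree_rep pw))"
    using hS(4) y'(1) Sw(1) by blast
  ultimately have qq: "q' i = q i" using sj(7) ag by blast
  have "x' \<in> paths T" using q'(3) trp Tr_C_le[OF T0] unfolding T_def by simp
  then have "x' = S.zw" using Tr_unique[OF T0 Tinf] unfolding T_def by blast
  moreover have "x' i = (q' i = 1)" using q'(2) unfolding cantor_rep_def by (auto split: if_splits)
  moreover have "S.zw i = dd j" using S.zw_d i_def by simp
  ultimately show False using qq sj(5) by simp
qed

end


theorem corollary24:
  fixes n :: nat
  assumes "1 \<le> n"
  shows "\<not> weihrauch_le tree_rep cantor_rep (C_le 2) tree_rep cantor_rep (C_eq n)"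
proof
  assume "weihrauch_le tree_rep cantor_rep (C_le 2) tree_rep cantor_rep (C_eq n)"
  then obtain K H where "computable_partial K" "computable_partial H"
    "\<forall>G. realizes tree_rep cantor_rep (C_eq n) G \<longrightarrow>
     realizes tree_rep cantor_rep (C_le 2) (\<lambda>p. Option.bind (H p) (\<lambda>h. Option.bind (G h) (\<lambda>r. K (pair p r))))"
    unfolding weihrauch_le_def by blast
  then show False by (rule no_reduction)
qed

end
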